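(* Let $b\in\mathbb{R}$ and let $\mathbf{y}(t),\mathbf{x}(t),\mathbf{z}(t)$ be differentiable curves in $\mathbb{R}^3$; set $\mathbf{b}=(0,0,b)^T$. For $\xi=(\xi^1,\xi^2,\xi^3)^T\in\mathbb{R}^3$ let $\hat\xi=\sum_{\alpha=1}^3\xi^\alpha\sigma^\alpha$, where $\sigma^1=\tfrac12\begin{pmatrix}0&\mathrm{i}\\ \mathrm{i}&0\end{pmatrix}$, $\sigma^2=\tfrac12\begin{pmatrix}0&1\\-1&0\end{pmatrix}$, $\sigma^3=\tfrac12\begin{pmatrix}\mathrm{i}&0\\0&-\mathrm{i}\end{pmatrix}$, and put $\mathcal{B}=\hat{\mathbf b}$, $\mathcal{Y}=\hat{\mathbf y}$, $\mathcal{X}=\hat{\mathbf x}$, $\mathcal{Z}=\hat{\mathbf z}$, $$\mathcal{L}(\lambda)=\mathcal{B}+\frac{\mathcal{Y}}{\lambda}+\frac{\mathcal{X}}{\lambda^2}+\frac{\mathcal{Z}}{\lambda^3},\qquad \mathcal{M}(\lambda)=\frac{\mathcal{X}}{\lambda}+\frac{\mathcal{Z}}{\lambda^2}.$$ Then the system $$\dot{\mathbf y}=\mathbf b\wedge\mathbf x,\qquad \dot{\mathbf x}=\mathbf y\wedge\mathbf x+\mathbf b\wedge\mathbf z,\qquad \dot{\mathbf z}=\mathbf y\wedge\mathbf z$$ holds if and only if $\frac{d}{dt}\mathcal{L}(\lambda)=[\mathcal{M}(\lambda),\mathcal{L}(\lambda)]$ for all $\lambda\in\mathbb{C}\setmi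nus\{0\}$.
   Context: $\wedge$ is the vector (cross) product on $\mathbb{R}^3$ and $[\cdot,\cdot]$ the matrix commutator. (This system is the Hamiltonian flow of $\tfrac12\langle\mathbf y,\mathbf y\rangle+\langle\mathbf b,\mathbf x\rangle$ for the Lie–Poisson brackets $\{y^\alpha,y^\beta\}=\epsilon^{\alpha\beta\gamma}y^\gamma$, $\{y^\alpha,x^\beta\}=\epsilon^{\alpha\beta\gamma}x^\gamma$, $\{y^\alpha,z^\beta\}=\epsilon^{\alpha\beta\gamma}z^\gamma$, $\{x^\alpha,x^\beta\}=\epsilon^{\alpha\beta\gamma}z^\gamma$, all other brackets zero.) *)

theory Defs
  imports "HOL-Analysis.Analysis"
begin

definition sigma1 :: "complex^2^2" where
  "sigma1 = vector [vector [0, \<i>/2], vector [\<i>/2, 0]]"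

definition sigma2 :: "complex^2^2" where
  "sigma2 = vector [vector [0, 1/2], vector [-1/2, 0]]"

definition sigma3 :: "complex^2^2" where
  "sigma3 = vector [vector [\<i>/2, 0], vector [0, -\<i>/2]]"

definition hat :: "real^3 \<Rightarrow> complex^2^2" where
  "hat \<xi> = (\<xi> $ 1) *\<^sub>R sigma1 + (\<xi> $ 2) *\<^sub>R sigma2 + (\<xi> $ 3) *\<^sub>R sigma3"

definition cmat_scale :: "complex \<Rightarrow> complex^2^2 \<Rightarrow> complex^2^2" where
  "cmat_scale c M = (\<chi> i j. c * M $ i $ j)"

definition commutator :: "complex^2^2 \<Rightarrow> complex^2^2 \<Rightarrow> complex^2^2" where
  "commutator A B = A ** B - B ** A"

definition bvec :: "real \<Rightarrow> real^3" where
  "bvec b = vector [0, 0, b]"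

definition Lax_L :: "real \<Rightarrow> real^3 \<Rightarrow> real^3 \<Rightarrow> real^3 \<Rightarrow> complex \<Rightarrow> complex^2^2" where
  "Lax_L b y x z lam = hat (bvec b) + cmat_scale (1/lam) (hat y)
     + cmat_scale (1/lam^2) (hat x) + cmat_scale (1/lam^3) (hat z)"

definition Lax_M :: "real^3 \<Rightarrow> real^3 \<Rightarrow> complex \<Rightarrow> complex^2^2" where
  "Lax_M x z lam = cmat_scale (1/lam) (hat x) + cmat_scale (1/lam^2) (hat z)"

end

theory Submission imports Defs begin

lemma hat_ent:
  "hat v $ 1 $ 1 = \<i> * of_real (v$3) / 2"
  "hat v $ 1 $ 2 = (\<i> * of_real (v$1) + of_real (v$2)) / 2"
  "hat v $ 2 $ 1 = (\<i> * of_real (v$1) - of_real (v$2)) / 2"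
  "hat v $ 2 $ 2 = - \<i> * of_real (v$3) / 2"
  by (simp_all add: hat_def sigma1_def sigma2_def sigma3_def vector_scaleR_component; simp add: scaleR_conv_of_real field_simps)+

lemma cs_ent: "cmat_scale c M $ i $ j = c * M $ i $ j"
  by (simp add: cmat_scale_def)

lemma cross_comp:
  "cross3 a c $ 1 = a$2 * c$3 - a$3 * c$2"
  "cross3 a c $ 2 = a$3 * c$1 - a$1 * c$3"
  "cross3 a c $ 3 = a$1 * c$2 - a$2 * c$1"
  by (simp_all add: cross3_def vector_def)

lemma bvec_comp: "bvec b $ 1 = 0" "bvec b $ 2 = 0" "bvec b $ 3 = b"
  by (simp_all add: bvec_def vector_def)

lemma mat_eqI: "(A::complex^2^2) $ 1 $ 1 = B $ 1 $ 1 \<Longrightarrow> A $ 1 $ 2 = B $ 1 $ 2 \<Longrightarrow>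
   A $ 2 $ 1 = B $ 2 $ 1 \<Longrightarrow> A $ 2 $ 2 = B $ 2 $ 2 \<Longrightarrow> A = B"
  by (simp add: vec_eq_iff forall_2)

lemma key: assumes "lam \<noteq> 0" shows
  "commutator (Lax_M x z lam) (Lax_L b y x z lam) =
     cmat_scale (1/lam) (hat (cross3 (bvec b) x)) + cmat_scale (1/lam^2) (hat (cross3 y x + cross3 (bvec b) z))
     + cmat_scale (1/lam^3) (hat (cross3 y z))"
  apply (rule mat_eqI)
  apply (simp_all add: commutator_def Lax_M_def Lax_L_def matrix_matrix_mult_def sum_2 cs_ent hat_ent
     cross_comp bvec_comp vector_add_component vector_minus_component)
  using assms apply (simp_all add: field_simps power2_eq_square power3_eq_cube)
  done

lemma bl: "bounded_linear (\<lambda>v. cmat_scale c (hat v))"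
proof -
  have "linear (\<lambda>v. cmat_scale c (hat v))"
    apply (rule linearI)
    apply (rule mat_eqI; simp add: cs_ent hat_ent; simp add: field_simps)
    apply (rule mat_eqI; simp add: cs_ent hat_ent vector_scaleR_component; simp add: scaleR_conv_of_real field_simps add: field_simps)
    done
  then show ?thesis by (simp add: linear_conv_bounded_linear)
qed

abbreviation "FF a b c lam \<equiv> cmat_scale (1/lam) (hat a) + cmat_scale (1/lam^2) (hat b) + cmat_scale (1/lam^3) (hat c)"

lemma deriv_L:
  assumes "(y has_vector_derivative y') (at t)" "(x has_vector_derivative x') (at t)"
    "(z has_vector_derivative z') (at t)"
  shows "((\<lambda>s. Lax_L b (y s) (x s) (z s) lam) has_vector_derivative FF y' x' z' lam) (at t)"
proof -
  have "((\<lambda>s. Lax_L b (y s) (x s) (z s) lam) has_vector_derivative 0 + cmat_scale (1/lam) (hat y') + cmat_scale (1/lam^2) (hat x') + cmat_scale (1/lam^3) (hat z')) (at t)"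
  unfolding Lax_L_def
  by (intro has_vector_derivative_add has_vector_derivative_const
     bounded_linear.has_vector_derivative[OF bl, unfolded o_def] assms)
  then show ?thesis by simp
qed

lemma coeff:
  assumes "\<forall>lam::complex. lam \<noteq> 0 \<longrightarrow> FF a b c lam = FF a' b' c' lam"
  shows "a = a' \<and> b = b' \<and> c = c'"
proof -
  have e1: "FF a b c 1 = FF a' b' c' 1" by (rule assms[rule_format]) simp
  have e2: "FF a b c (-1) = FF a' b' c' (-1)" by (rule assms[rule_format]) simp
  have e3: "FF a b c (1/2) = FF a' b' c' (1/2)" by (rule assms[rule_format]) simp
  have "FF a b c 1 $ 1 $ 1 = FF a' b' c' 1 $ 1 $ 1" "FF a b c 1 $ 1 $ 2 = FF a' b' c' 1 $ 1 $ 2"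
    "FF a b c (-1) $ 1 $ 1 = FF a' b' c' (-1) $ 1 $ 1" "FF a b c (-1) $ 1 $ 2 = FF a' b' c' (-1) $ 1 $ 2"
    "FF a b c (1/2) $ 1 $ 1 = FF a' b' c' (1/2) $ 1 $ 1" "FF a b c (1/2) $ 1 $ 2 = FF a' b' c' (1/2) $ 1 $ 2"
    using e1 e2 e3 by simp_all
  then have "a$1 = a'$1 \<and> a$2 = a'$2 \<and> a$3 = a'$3 \<and> b$1 = b'$1 \<and> b$2 = b'$2 \<and> b$3 = b'$3 \<and>
      c$1 = c'$1 \<and> c$2 = c'$2 \<and> c$3 = c'$3"
    by (simp add: cs_ent hat_ent complex_eq_iff field_simps power2_eq_square power3_eq_cube)
  then show ?thesis by (simp add: vec_eq_iff forall_3)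
qed
theorem proposition4:
  fixes b :: real and y x z :: "real \<Rightarrow> real^3"
  assumes dy: "\<And>t. y differentiable (at t)"
      and dx: "\<And>t. x differentiable (at t)"
      and dz: "\<And>t. z differentiable (at t)"
  shows "(\<forall>t. vector_derivative y (at t) = cross3 (bvec b) (x t)
             \<and> vector_derivative x (at t) = cross3 (y t) (x t) + cross3 (bvec b) (z t)
             \<and> vector_derivative z (at t) = cross3 (y t) (z t))
     \<longleftrightarrow>
         (\<forall>t. \<forall>lam::complex. lam \<noteq> 0 \<longrightarrow>
             vector_derivative (\<lambda>s. Lax_L b (y s) (x s) (z s) lam) (at t)
               = commutator (Lax_M (x t) (z t) lam) (Lax_L b (y t) (x t) (z t) lam))"
proof -
  have L: "vector_derivative (\<lambda>s. Lax_L b (y s) (x s) (z s) lam) (at t)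
      = FF (vector_derivative y (at t)) (vector_derivative x (at t)) (vector_derivative z (at t)) lam" for t lam
    by (rule vector_derivative_at, rule deriv_L; rule vector_derivative_works[THEN iffD1]; fact)
  have R: "lam \<noteq> 0 \<Longrightarrow> commutator (Lax_M (x t) (z t) lam) (Lax_L b (y t) (x t) (z t) lam)
      = FF (cross3 (bvec b) (x t)) (cross3 (y t) (x t) + cross3 (bvec b) (z t)) (cross3 (y t) (z t)) lam" for t lam
    by (rule key)
  show ?thesis
  proof
    assume H: "\<forall>t. vector_derivative y (at t) = cross3 (bvec b) (x t)
             \<and> vector_derivative x (at t) = cross3 (y t) (x t) + cross3 (bvec b) (z t)
             \<and> vector_derivative z (at t) = cross3 (y t) (z t)"
    show "\<forall>t. \<forall>lam::complex. lam \<noteq> 0 \<longrightarrow>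
             vector_derivative (\<lambda>s. Lax_L b (y s) (x s) (z s) lam) (at t)
               = commutator (Lax_M (x t) (z t) lam) (Lax_L b (y t) (x t) (z t) lam)"
      using H by (simp add: L R)
  next
    assume H: "\<forall>t. \<forall>lam::complex. lam \<noteq> 0 \<longrightarrow>
             vector_derivative (\<lambda>s. Lax_L b (y s) (x s) (z s) lam) (at t)
               = commutator (Lax_M (x t) (z t) lam) (Lax_L b (y t) (x t) (z t) lam)"
    show "\<forall>t. vector_derivative y (at t) = cross3 (bvec b) (x t)
             \<and> vector_derivative x (at t) = cross3 (y t) (x t) + cross3 (bvec b) (z t)
             \<and> vector_derivative z (at t) = cross3 (y t) (z t)"
    proof
      fix t
      show "vector_derivative y (at t) = cross3 (bvec b) (x t)
             \<and> vector_derivative x (at t) = cross3 (y t) (x t) + cross3 (bvec b) (z t)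
             \<and> vector_derivative z (at t) = cross3 (y t) (z t)"
        by (rule coeff) (use H in \<open>simp add: L R\<close>)
    qed
  qed
qed

end
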